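(* Let $m>2$ be an integer and, in formal (or analytic) coordinates $(\theta,x_1,\dots,x_{2n})$ on $(\mathbb{K}^{2n+1},O)$, let $\alpha=d(\theta^m-x_1\theta)+\gamma$, where $\gamma=\sum_{i=1}^{2n}g_i(x)\,dx_i$ has coefficients independent of $\theta$ and $d\gamma$ is a symplectic form in the variables $x_1,\dots,x_{2n}$. Let $X=f_0\,\partial/\partial\theta+\sum_{i=1}^{2n}f_i\,\partial/\partial x_i$ be a formal (or analytic) vector field with $\mathcal{L}_X\alpha=0$. Then $f_0=f_1=0$.
   Context: $\mathbb{K}=\mathbb{R}$ or $\mathbb{C}$. *)

theory Defs
  imports Complex_Main "HOL-Library.Poly_Mapping"
begin

text \<open>Formal power series over a field in the variables indexed by natural numbers:
  a series is its coefficient function on multi-indices (finitely supported exponent vectors).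
  Variable 0 is theta, variables 1..2n are x_1..x_2n.\<close>

type_synonym 'a mps = "(nat \<Rightarrow>\<^sub>0 nat) \<Rightarrow> 'a"

definition mps_const :: "'a::zero \<Rightarrow> 'a mps" where
  "mps_const c = (\<lambda>a. if a = 0 then c else 0)"

definition mps_var :: "nat \<Rightarrow> 'a::{zero,one} mps" where
  "mps_var i = (\<lambda>a. if a = Poly_Mapping.single i 1 then 1 else 0)"

definition mps_add :: "'a::plus mps \<Rightarrow> 'a mps \<Rightarrow> 'a mps" where
  "mps_add p q = (\<lambda>a. p a + q a)"

definition mps_diff :: "'a::minus mps \<Rightarrow> 'a mps \<Rightarrow> 'a mps" where
  "mps_diff p q = (\<lambda>a. p a - q a)"

text \<open>Cauchy product; the index set is finite.\<close>
definition mps_mul :: "'a::comm_semiring_1 mps \<Rightarrow> 'a mps \<Rightarrow> 'a mps" where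
  "mps_mul p q = (\<lambda>a. \<Sum>(b, c)\<in>{(b, c). b + c = a}. p b * q c)"

primrec mps_pow :: "'a::comm_semiring_1 mps \<Rightarrow> nat \<Rightarrow> 'a mps" where
  "mps_pow p 0 = mps_const 1"
| "mps_pow p (Suc k) = mps_mul p (mps_pow p k)"

definition mps_deriv :: "nat \<Rightarrow> 'a::comm_semiring_1 mps \<Rightarrow> 'a mps" where
  "mps_deriv i p = (\<lambda>a. of_nat (Poly_Mapping.lookup a i + 1) * p (a + Poly_Mapping.single i 1))"

definition mps_vars :: "nat set \<Rightarrow> 'a::zero mps \<Rightarrow> bool" where
  "mps_vars V p \<longleftrightarrow> (\<forall>a. p a \<noteq> 0 \<longrightarrow> Poly_Mapping.keys a \<subseteq> V)"

text \<open>1-forms are coefficient families (index j is the coefficient of dy_j),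
  2-forms are families w i j (coefficient of dy_i \<and> dy_j, skew).\<close>

definition mps_d0 :: "'a::comm_semiring_1 mps \<Rightarrow> nat \<Rightarrow> 'a mps" where
  "mps_d0 h = (\<lambda>j. mps_deriv j h)"

definition mps_d1 :: "(nat \<Rightarrow> 'a::comm_ring_1 mps) \<Rightarrow> nat \<Rightarrow> nat \<Rightarrow> 'a mps" where
  "mps_d1 \<gamma> = (\<lambda>i j. mps_diff (mps_deriv i (\<gamma> j)) (mps_deriv j (\<gamma> i)))"

text \<open>A (formal) 2-form in the variables I is nondegenerate iff its value at the origin
  (constant terms) is a nondegenerate bilinear form; equivalently its coefficient matrix is
  invertible over the power series ring.\<close>
definition nondegenerate_2form :: "nat set \<Rightarrow> (nat \<Rightarrow> nat \<Rightarrow> 'a::comm_ring_1 mps) \<Rightarrow> bool" where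
  "nondegenerate_2form I w \<longleftrightarrow>
     (\<forall>v::nat \<Rightarrow> 'a. (\<forall>j\<in>I. (\<Sum>i\<in>I. w i j 0 * v i) = 0) \<longrightarrow> (\<forall>i\<in>I. v i = 0))"

definition lie_deriv_1form ::
  "nat set \<Rightarrow> (nat \<Rightarrow> 'a::comm_semiring_1 mps) \<Rightarrow> (nat \<Rightarrow> 'a mps) \<Rightarrow> nat \<Rightarrow> 'a mps" where
  "lie_deriv_1form I X w = (\<lambda>j a. \<Sum>k\<in>I.
       mps_mul (X k) (mps_deriv k (w j)) a + mps_mul (w k) (mps_deriv j (X k)) a)"

end

theory Submission imports Defs "HOL-Library.FuncSet" begin

lemma fin_dec: "finite {(b, c). b + c = (a::nat \<Rightarrow>\<^sub>0 nat)}"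
proof -
  let ?S = "{b. \<exists>c. b + c = a}"
  have inj: "inj_on (\<lambda>b::nat \<Rightarrow>\<^sub>0 nat. restrict (Poly_Mapping.lookup b) (Poly_Mapping.keys a)) ?S"
  proof (rule inj_onI)
    fix x y :: "nat \<Rightarrow>\<^sub>0 nat" assume x: "x \<in> ?S" and y: "y \<in> ?S" and eq: "restrict (Poly_Mapping.lookup x) (Poly_Mapping.keys a) = restrict (Poly_Mapping.lookup y) (Poly_Mapping.keys a)"
    show "x = y"
    proof (rule poly_mapping_eqI)
      fix k
      show "Poly_Mapping.lookup x k = Poly_Mapping.lookup y k"
      proof (cases "k \<in> Poly_Mapping.keys a")
        case True then show ?thesis using eq by (metis restrict_apply')
      next
        case False
        from x obtain c where "x + c = a" by auto
        hence "Poly_Mapping.lookup x k + Poly_Mapping.lookup c k = Poly_Mapping.lookup a k" by (metis lookup_add)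
        moreover from y obtain d where "y + d = a" by auto
        hence "Poly_Mapping.lookup y k + Poly_Mapping.lookup d k = Poly_Mapping.lookup a k" by (metis lookup_add)
        ultimately show ?thesis using False by (simp add: Poly_Mapping.in_keys_iff)
      qed
    qed
  qed
  have sub: "(\<lambda>b. restrict (Poly_Mapping.lookup b) (Poly_Mapping.keys a)) ` ?S \<subseteq> PiE (Poly_Mapping.keys a) (\<lambda>i. {..Poly_Mapping.lookup a i})"
  proof
    fix z assume "z \<in> (\<lambda>b. restrict (Poly_Mapping.lookup b) (Poly_Mapping.keys a)) ` ?S"
    then obtain b c where z: "z = restrict (Poly_Mapping.lookup b) (Poly_Mapping.keys a)" and bc: "b + c = a" by auto
    have "\<And>i. Poly_Mapping.lookup b i \<le> Poly_Mapping.lookup a i" using bc by (metis le_add1 lookup_add)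
    then show "z \<in> PiE (Poly_Mapping.keys a) (\<lambda>i. {..Poly_Mapping.lookup a i})" using z by auto
  qed
  have "finite ?S"
    using finite_imageD[OF finite_subset[OF sub] inj] by (simp add: finite_PiE)
  moreover have "{(b, c). b + c = a} = (\<lambda>b. (b, a - b)) ` ?S"
  proof (rule set_eqI, rule iffI)
    fix p assume "p \<in> {(b, c). b + c = a}"
    then obtain b c where p: "p = (b, c)" and bc: "b + c = a" by auto
    have "c = a - b" using bc by (metis add_diff_cancel_left')
    then show "p \<in> (\<lambda>b. (b, a - b)) ` ?S" using p bc by blast
  next
    fix p assume "p \<in> (\<lambda>b. (b, a - b)) ` ?S"
    then obtain b c where p: "p = (b, a - b)" and bc: "b + c = a" by auto
    have "c = a - b" using bc by (metis add_diff_cancel_left')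
    then show "p \<in> {(b, c). b + c = a}" using p bc by auto
  qed
  ultimately show ?thesis by simp
qed

lemma dec_eq: "b + c = (a::nat \<Rightarrow>\<^sub>0 nat) \<Longrightarrow> c = a - b"
  by (metis add_diff_cancel_left')

lemma mul_ind_left:
  fixes q :: "'a::comm_semiring_1 mps"
  shows "mps_mul (\<lambda>c. if c = e then x else 0) q a = (if \<exists>b. a = e + b then x * q (a - e) else 0)"
proof -
  have "mps_mul (\<lambda>c. if c = e then x else 0) q a
      = (\<Sum>p\<in>{(b, c). b + c = a}. if fst p = e then x * q (snd p) else 0)"
    unfolding mps_mul_def by (rule sum.cong) auto
  also have "\<dots> = (\<Sum>p\<in>{p\<in>{(b, c). b + c = a}. fst p = e}. x * q (snd p))"
    by (rule sum.inter_filter[symmetric, OF fin_dec])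
  also have "{p\<in>{(b, c). b + c = a}. fst p = e} = (if \<exists>b. a = e + b then {(e, a - e)} else {})"
    by (auto dest: dec_eq)
  finally show ?thesis by auto
qed

lemma mul_comm:
  fixes p :: "'a::comm_semiring_1 mps"
  shows "mps_mul p q = mps_mul q p"
proof
  fix a
  show "mps_mul p q a = mps_mul q p a"
    unfolding mps_mul_def
    by (rule sum.reindex_bij_witness[of _ prod.swap prod.swap]) (auto simp: add.commute mult.commute)
qed

lemma mul_ind_right:
  fixes q :: "'a::comm_semiring_1 mps"
  shows "mps_mul q (\<lambda>c. if c = e then x else 0) a = (if \<exists>b. a = e + b then x * q (a - e) else 0)"
  by (simp add: mul_comm[of q] mul_ind_left)

lemma mul_zero_right: "mps_mul (p :: 'a::comm_semiring_1 mps) (\<lambda>_. 0) = (\<lambda>_. 0)"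
  unfolding mps_mul_def by simp

lemma mul_zero_left: "mps_mul (\<lambda>_. 0) (p :: 'a::comm_semiring_1 mps) = (\<lambda>_. 0)"
  unfolding mps_mul_def by simp

lemma mul_add_right: "mps_mul (p :: 'a::comm_semiring_1 mps) (\<lambda>a. q a + r a) a = mps_mul p q a + mps_mul p r a"
  unfolding mps_mul_def by (simp add: distrib_left sum.distrib case_prod_beta)

lemma mul_add_left: "mps_mul (\<lambda>a. q a + r a) (p :: 'a::comm_semiring_1 mps) a = mps_mul q p a + mps_mul r p a"
  unfolding mps_mul_def by (simp add: distrib_right sum.distrib case_prod_beta)

lemma mul_diff_right: "mps_mul (p :: 'a::comm_ring_1 mps) (\<lambda>a. q a - r a) a = mps_mul p q a - mps_mul p r a"
  unfolding mps_mul_def by (simp add: right_diff_distrib sum_subtractf case_prod_beta)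

lemma mul_diff_left: "mps_mul (\<lambda>a. q a - r a) (p :: 'a::comm_ring_1 mps) a = mps_mul q p a - mps_mul r p a"
  unfolding mps_mul_def by (simp add: left_diff_distrib sum_subtractf case_prod_beta)

lemma mul_uminus_left: "mps_mul (\<lambda>a. - q a) (p :: 'a::comm_ring_1 mps) a = - mps_mul q p a"
  unfolding mps_mul_def by (simp add: sum_negf case_prod_beta)


lemma pm_minus_add: "1 \<le> Poly_Mapping.lookup b i \<Longrightarrow> (b - Poly_Mapping.single i 1) + Poly_Mapping.single i 1 = (b::nat\<Rightarrow>\<^sub>0nat)"
  by (rule poly_mapping_eqI) (auto simp add: lookup_add lookup_minus lookup_single when_def)

lemma lookup_minus_single: "Poly_Mapping.lookup (b - Poly_Mapping.single i 1) i = Poly_Mapping.lookup (b::nat\<Rightarrow>\<^sub>0nat) i - 1"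
  by (simp add: lookup_minus)

lemma shift_sum:
  fixes F :: "(nat\<Rightarrow>\<^sub>0nat) \<Rightarrow> (nat\<Rightarrow>\<^sub>0nat) \<Rightarrow> 'a::comm_semiring_1"
  shows "(\<Sum>(b,c)\<in>{(b,c). b + c = a + Poly_Mapping.single i 1}. of_nat (Poly_Mapping.lookup b i) * F b c)
       = (\<Sum>(b,c)\<in>{(b,c). b + c = a}. of_nat (Poly_Mapping.lookup b i + 1) * F (b + Poly_Mapping.single i 1) c)"
proof -
  let ?e = "Poly_Mapping.single i (1::nat)"
  let ?h = "\<lambda>(b::nat\<Rightarrow>\<^sub>0nat, c::nat\<Rightarrow>\<^sub>0nat). (b + ?e, c)"
  let ?g = "\<lambda>(b,c). of_nat (Poly_Mapping.lookup b i) * F b c"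
  let ?T = "{(b,c). b + c = a + ?e}"
  have inj: "inj_on ?h {(b,c). b + c = a}"
    by (rule inj_onI) auto
  have sub: "?h ` {(b,c). b + c = a} \<subseteq> ?T"
    by (auto simp: ac_simps)
  have zero: "\<forall>x\<in>?T - ?h ` {(b,c). b + c = a}. ?g x = 0"
  proof
    fix x assume x: "x \<in> ?T - ?h ` {(b,c). b + c = a}"
    obtain b c where xbc: "x = (b, c)" by (cases x)
    have bc: "b + c = a + ?e" using x xbc by auto
    show "?g x = 0"
    proof (cases "1 \<le> Poly_Mapping.lookup b i")
      case True
      let ?b' = "b - ?e"
      have "?b' + ?e = b" using True by (rule pm_minus_add)
      hence "(?b' + c) + ?e = a + ?e" using bc by (simp add: ac_simps)
      hence "?b' + c = a" by simp
      hence "x \<in> ?h ` {(b,c). b + c = a}" using xbc \<open>?b' + ?e = b\<close> by (auto simp: image_iff intro!: exI[of _ ?b'])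
      then show ?thesis using x by auto
    next
      case False then have "Poly_Mapping.lookup b i = 0" by simp
      then show ?thesis using xbc by simp
    qed
  qed
  have "(\<Sum>x\<in>?T. ?g x) = (\<Sum>x\<in>?h ` {(b,c). b + c = a}. ?g x)"
    by (rule sum.mono_neutral_right[OF fin_dec sub zero])
  also have "\<dots> = (\<Sum>x\<in>{(b,c). b + c = a}. ?g (?h x))"
    by (simp only: sum.reindex[OF inj] comp_def)
  also have "\<dots> = (\<Sum>(b,c)\<in>{(b,c). b + c = a}. of_nat (Poly_Mapping.lookup b i + 1) * F (b + ?e) c)"
    by (rule sum.cong) (auto simp: lookup_add)
  finally show ?thesis by simp
qed

lemma half_deriv:
  fixes p q :: "'a::comm_semiring_1 mps"
  shows "(\<Sum>(b,c)\<in>{(b,c). b + c = a + Poly_Mapping.single i 1}. of_nat (Poly_Mapping.lookup b i) * (p b * q c))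
     = mps_mul (mps_deriv i p) q a"
  unfolding mps_mul_def mps_deriv_def shift_sum
  by (rule sum.cong) (auto simp: mult.assoc)

lemma deriv_mul:
  fixes p q :: "'a::comm_semiring_1 mps"
  shows "mps_deriv i (mps_mul p q) a = mps_mul (mps_deriv i p) q a + mps_mul p (mps_deriv i q) a"
proof -
  let ?e = "Poly_Mapping.single i (1::nat)"
  let ?T = "{(b,c). b + c = a + ?e}"
  have "mps_deriv i (mps_mul p q) a = (\<Sum>(b,c)\<in>?T. of_nat (Poly_Mapping.lookup a i + 1) * (p b * q c))"
    unfolding mps_deriv_def mps_mul_def by (simp add: sum_distrib_left case_prod_beta)
  also have "\<dots> = (\<Sum>(b,c)\<in>?T. of_nat (Poly_Mapping.lookup b i) * (p b * q c) + of_nat (Poly_Mapping.lookup c i) * (p b * q c))"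
  proof (rule sum.cong)
    fix x assume "x \<in> ?T"
    then obtain b c where x: "x = (b,c)" and bc: "b + c = a + ?e" by auto
    have "Poly_Mapping.lookup b i + Poly_Mapping.lookup c i = Poly_Mapping.lookup a i + 1"
      using arg_cong[OF bc, of "\<lambda>z. Poly_Mapping.lookup z i"] by (simp add: lookup_add)
    then have "(of_nat (Poly_Mapping.lookup a i + 1) :: 'a) = of_nat (Poly_Mapping.lookup b i) + of_nat (Poly_Mapping.lookup c i)"
      by (metis of_nat_add)
    then show "(case x of (b,c) \<Rightarrow> of_nat (Poly_Mapping.lookup a i + 1) * (p b * q c)) = (case x of (b,c) \<Rightarrow> of_nat (Poly_Mapping.lookup b i) * (p b * q c) + of_nat (Poly_Mapping.lookup c i) * (p b * q c))"
      using x by (simp add: distrib_right)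
  qed simp
  also have "\<dots> = (\<Sum>(b,c)\<in>?T. of_nat (Poly_Mapping.lookup b i) * (p b * q c)) + (\<Sum>(b,c)\<in>?T. of_nat (Poly_Mapping.lookup c i) * (p b * q c))"
    by (simp add: sum.distrib case_prod_beta)
  finally have X0: "mps_deriv i (mps_mul p q) a = (\<Sum>(b,c)\<in>?T. of_nat (Poly_Mapping.lookup b i) * (p b * q c)) + (\<Sum>(b,c)\<in>?T. of_nat (Poly_Mapping.lookup c i) * (p b * q c))" .
  have sw: "(\<Sum>(b,c)\<in>?T. of_nat (Poly_Mapping.lookup c i) * (p b * q c)) = (\<Sum>(b,c)\<in>?T. of_nat (Poly_Mapping.lookup b i) * (q b * p c))"
    by (rule sum.reindex_bij_witness[of _ prod.swap prod.swap]) (auto simp: add.commute mult.commute)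
  have X: "mps_deriv i (mps_mul p q) a = mps_mul (mps_deriv i p) q a + mps_mul (mps_deriv i q) p a"
    using X0 unfolding sw half_deriv .
  have "mps_mul (mps_deriv i q) p a = mps_mul p (mps_deriv i q) a"
    by (rule fun_cong[OF mul_comm])
  then show ?thesis using X by simp
qed

lemma deriv_comm: "mps_deriv i (mps_deriv j (p::'a::comm_semiring_1 mps)) = mps_deriv j (mps_deriv i p)"
proof
  fix a
  show "mps_deriv i (mps_deriv j p) a = mps_deriv j (mps_deriv i p) a"
    by (cases "i = j") (auto simp: mps_deriv_def lookup_add lookup_single when_def ac_simps)
qed


lemma deriv_add: "mps_deriv i (\<lambda>a. p a + q a) a = mps_deriv i (p::'a::comm_semiring_1 mps) a + mps_deriv i q a"
  unfolding mps_deriv_def by (simp add: distrib_left)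

lemma deriv_diff: "mps_deriv i (\<lambda>a. p a - q a) a = mps_deriv i (p::'a::comm_ring_1 mps) a - mps_deriv i q a"
  unfolding mps_deriv_def by (simp add: right_diff_distrib)

lemma deriv_sum: "mps_deriv i (\<lambda>a. \<Sum>k\<in>K. F k a) a = (\<Sum>k\<in>K. mps_deriv i (F k :: 'a::comm_semiring_1 mps) a)"
  unfolding mps_deriv_def by (simp add: sum_distrib_left)

lemma deriv_zero: "mps_deriv i (\<lambda>_. 0::'a::comm_semiring_1) = (\<lambda>_. 0)"
  unfolding mps_deriv_def by simp

lemma const0: "mps_const 0 = (\<lambda>_. 0)"
  unfolding mps_const_def by simp

lemma deriv_coeff_zero:
  assumes "mps_deriv i (p::'a::{comm_semiring_1,semiring_char_0,semiring_no_zero_divisors} mps) a = 0"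
  shows "p (a + Poly_Mapping.single i 1) = 0"
  using assms unfolding mps_deriv_def by (metis mult_eq_0_iff of_nat_neq_0 Suc_eq_plus1)

lemma vars_deriv:
  assumes "mps_vars V (p::'a::comm_semiring_1 mps)" "i \<notin> V"
  shows "mps_deriv i p a = 0"
proof -
  have "i \<in> Poly_Mapping.keys (a + Poly_Mapping.single i 1)"
    by (simp add: Poly_Mapping.in_keys_iff lookup_add)
  then have "p (a + Poly_Mapping.single i 1) = 0" using assms unfolding mps_vars_def by blast
  then show ?thesis unfolding mps_deriv_def by simp
qed

definition tdeg :: "(nat \<Rightarrow>\<^sub>0 nat) \<Rightarrow> nat" where
  "tdeg a = (\<Sum>i\<in>Poly_Mapping.keys a. Poly_Mapping.lookup a i)"

lemma tdeg_superset: "finite K \<Longrightarrow> Poly_Mapping.keys a \<subseteq> K \<Longrightarrow> tdeg a = (\<Sum>i\<in>K. Poly_Mapping.lookup a i)"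
  unfolding tdeg_def by (rule sum.mono_neutral_left) (auto simp: Poly_Mapping.in_keys_iff)

lemma tdeg_add: "tdeg (b + c) = tdeg b + tdeg c"
proof -
  let ?K = "Poly_Mapping.keys b \<union> Poly_Mapping.keys c \<union> Poly_Mapping.keys (b + c)"
  have f: "finite ?K" by simp
  have "tdeg b = (\<Sum>i\<in>?K. Poly_Mapping.lookup b i)" by (rule tdeg_superset[OF f]) auto
  moreover have "tdeg c = (\<Sum>i\<in>?K. Poly_Mapping.lookup c i)" by (rule tdeg_superset[OF f]) auto
  moreover have "tdeg (b + c) = (\<Sum>i\<in>?K. Poly_Mapping.lookup (b + c) i)" by (rule tdeg_superset[OF f]) auto
  ultimately show ?thesis by (simp add: lookup_add sum.distrib)
qed

lemma tdeg_zero: "tdeg c = 0 \<Longrightarrow> c = 0"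
  unfolding tdeg_def by (metis (no_types, lifting) Poly_Mapping.in_keys_iff finite_keys lookup_zero poly_mapping_eqI sum_eq_0_iff)

lemma nondeg_zero:
  fixes v :: "nat \<Rightarrow> 'a::comm_ring_1 mps"
  assumes fin: "finite I" and nd: "nondegenerate_2form I w"
    and eq: "\<forall>j\<in>I. \<forall>a. (\<Sum>k\<in>I. mps_mul (v k) (w k j) a) = 0"
  shows "\<forall>k\<in>I. v k a = 0"
proof (induction "tdeg a" arbitrary: a rule: less_induct)
  case less
  have IH: "\<And>b k. tdeg b < tdeg a \<Longrightarrow> k \<in> I \<Longrightarrow> v k b = 0" using less by blast
  have red: "mps_mul (v k) (w k j) a = v k a * w k j 0" if "k \<in> I" for k j
  proof -
    have "mps_mul (v k) (w k j) a = (\<Sum>p\<in>{(b, c). b + c = a}. v k (fst p) * w k j (snd p))"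
      unfolding mps_mul_def by (simp add: case_prod_beta)
    also have "\<dots> = v k (fst (a, 0)) * w k j (snd (a, 0)) + (\<Sum>p\<in>{(b, c). b + c = a} - {(a,0)}. v k (fst p) * w k j (snd p))"
      using sum.remove[OF fin_dec, where x="(a,0)" and g="\<lambda>p. v k (fst p) * w k j (snd p)"] by simp
    also have "(\<Sum>p\<in>{(b, c). b + c = a} - {(a,0)}. v k (fst p) * w k j (snd p)) = 0"
    proof (rule sum.neutral, rule ballI)
      fix p assume p: "p \<in> {(b, c). b + c = a} - {(a,0)}"
      obtain b c where pbc: "p = (b, c)" by (cases p)
      have bc: "b + c = a" using p pbc by simp
      have "c \<noteq> 0" using p pbc bc by auto
      then have "tdeg c \<noteq> 0" using tdeg_zero by blast
      then have "tdeg b < tdeg a" using bc tdeg_add[of b c] by simp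
      then show "v k (fst p) * w k j (snd p) = 0" using IH[OF _ that] pbc by simp
    qed
    finally show ?thesis by simp
  qed
  have "\<forall>j\<in>I. (\<Sum>i\<in>I. w i j 0 * v i a) = 0"
  proof
    fix j assume j: "j \<in> I"
    have "(\<Sum>i\<in>I. w i j 0 * v i a) = (\<Sum>k\<in>I. mps_mul (v k) (w k j) a)"
      by (rule sum.cong) (simp_all add: red mult.commute)
    then show "(\<Sum>i\<in>I. w i j 0 * v i a) = 0" using eq j by simp
  qed
  moreover from nd have "(\<forall>j\<in>I. (\<Sum>i\<in>I. w i j 0 * v i a) = 0) \<longrightarrow> (\<forall>i\<in>I. v i a = 0)"
    unfolding nondegenerate_2form_def by (rule allE[of _ "\<lambda>i. v i a"]) simp
  ultimately show ?case by blast
qed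

lemma pow_var0: "mps_pow (mps_var 0) k = (\<lambda>c. if c = Poly_Mapping.single 0 k then (1::'a::comm_semiring_1) else 0)"
proof (induction k)
  case 0
  show ?case by (simp add: mps_const_def)
next
  case (Suc k)
  show ?case
  proof
    fix a
    have e: "Poly_Mapping.single 0 (Suc k) = Poly_Mapping.single 0 1 + Poly_Mapping.single (0::nat) k"
      by (simp add: single_add[symmetric])
    show "mps_pow (mps_var 0) (Suc k) a = (if a = Poly_Mapping.single 0 (Suc k) then (1::'a) else 0)"
      unfolding mps_pow.simps Suc.IH unfolding mps_var_def mul_ind_left e
      by (auto dest: dec_eq)
  qed
qed

lemma mul_var10: "mps_mul (mps_var 1) (mps_var 0) = (\<lambda>c. if c = Poly_Mapping.single 1 1 + Poly_Mapping.single 0 1 then (1::'a::comm_semiring_1) else 0)"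
proof
  fix a
  show "mps_mul (mps_var 1) (mps_var 0) a = (if a = Poly_Mapping.single 1 1 + Poly_Mapping.single 0 1 then (1::'a) else 0)"
    unfolding mps_var_def mul_ind_left by (auto dest: dec_eq)
qed


lemma single_split: "m > 0 \<Longrightarrow> Poly_Mapping.single (0::nat) m = Poly_Mapping.single 0 (m - 1) + Poly_Mapping.single 0 (1::nat)"
  by (simp add: single_add[symmetric])

lemma D0P:
  assumes "m > 2"
  shows "mps_deriv 0 (mps_diff (mps_pow (mps_var 0) m) (mps_mul (mps_var 1) (mps_var 0))) a
    = (if a = Poly_Mapping.single 0 (m-1) then of_nat m else 0) - (if a = Poly_Mapping.single 1 1 then (1::'a::comm_ring_1) else 0)"
proof -
  let ?E = "Poly_Mapping.single (0::nat) (m - 1::nat)"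
  let ?e0 = "Poly_Mapping.single (0::nat) (1::nat)"
  let ?e1 = "Poly_Mapping.single (1::nat) (1::nat)"
  have s: "Poly_Mapping.single 0 m = ?E + ?e0" using assms by (intro single_split) simp
  have c1: "(a + ?e0 = Poly_Mapping.single 0 m) = (a = ?E)" unfolding s by simp
  have c2: "(a + ?e0 = ?e1 + ?e0) = (a = ?e1)" by simp
  have ne: "?E \<noteq> ?e1"
  proof
    assume "?E = ?e1"
    then have "Poly_Mapping.lookup ?E 1 = Poly_Mapping.lookup ?e1 1" by simp
    then show False by (simp add: lookup_single)
  qed
  have lE: "Poly_Mapping.lookup ?E 0 + 1 = m" using assms by simp
  show ?thesis
    unfolding mps_deriv_def mps_diff_def pow_var0 mul_var10 c1 c2
    using ne lE by (auto simp: lookup_single)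
qed

lemma DkR:
  assumes "k \<noteq> 0"
  shows "mps_deriv k (\<lambda>a. (if a = Poly_Mapping.single 0 (m-1) then of_nat m else 0) - (if a = Poly_Mapping.single 1 1 then (1::'a::comm_ring_1) else 0)) a
    = - (if k = 1 \<and> a = 0 then 1 else 0)"
proof -
  let ?E = "Poly_Mapping.single (0::nat) (m - 1::nat)"
  let ?ek = "Poly_Mapping.single k (1::nat)"
  let ?e1 = "Poly_Mapping.single (1::nat) (1::nat)"
  have n1: "a + ?ek \<noteq> ?E"
  proof
    assume "a + ?ek = ?E"
    then have "Poly_Mapping.lookup (a + ?ek) k = Poly_Mapping.lookup ?E k" by simp
    then show False using assms by (simp add: lookup_add lookup_single)
  qed
  have n2: "(a + ?ek = ?e1) = (k = 1 \<and> a = 0)"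
  proof
    assume h: "a + ?ek = ?e1"
    then have "Poly_Mapping.lookup (a + ?ek) k = Poly_Mapping.lookup ?e1 k" by simp
    then have k1: "k = 1" by (auto simp: lookup_add lookup_single when_def split: if_splits)
    then have "a + ?e1 = 0 + ?e1" using h by simp
    then show "k = 1 \<and> a = 0" using k1 by (metis add_right_cancel)
  next
    assume "k = 1 \<and> a = 0" then show "a + ?ek = ?e1" by simp
  qed
  show ?thesis
    unfolding mps_deriv_def using n1 n2 by (auto simp: lookup_single)
qed


theorem lemma5p9:
  fixes m n :: nat and g f :: "nat \<Rightarrow> 'a::field_char_0 mps"
  assumes "m > 2" and "n \<ge> 1"
    and "\<forall>i\<in>{1..2*n}. mps_vars {1..2*n} (g i)"
    and "nondegenerate_2form {1..2*n} (mps_d1 g)"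
    and "\<forall>k\<in>{0..2*n}. mps_vars {0..2*n} (f k)"
    and "\<forall>j\<in>{0..2*n}. lie_deriv_1form {0..2*n} f
           (\<lambda>i. mps_add
                  (mps_d0 (mps_diff (mps_pow (mps_var 0) m) (mps_mul (mps_var 1) (mps_var 0))) i)
                  (if i \<in> {1..2*n} then g i else mps_const 0)) j
         = mps_const 0"
  shows "f 0 = mps_const 0 \<and> f 1 = mps_const 0"
proof -
  define I where "I = {0..2*n}"
  define J where "J = {1..2*n}"
  define P :: "'a mps" where "P = mps_diff (mps_pow (mps_var 0) m) (mps_mul (mps_var 1) (mps_var 0))"
  define G :: "nat \<Rightarrow> 'a mps" where "G = (\<lambda>i. if i \<in> J then g i else mps_const 0)"
  define \<alpha> where "\<alpha> = (\<lambda>i. mps_add (mps_d0 P i) (G i))"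
  have finI: "finite I" and finJ: "finite J" by (simp_all add: I_def J_def)
  have IJ: "I = insert 0 J" and nJ: "0 \<notin> J" by (auto simp: I_def J_def)
  have oneJ: "1 \<in> J" using assms(2) by (simp add: J_def)
  have lie: "(\<Sum>k\<in>I. mps_mul (f k) (mps_deriv k (\<alpha> j)) a + mps_mul (\<alpha> k) (mps_deriv j (f k)) a) = 0"
    if j: "j \<in> I" for j a
  proof -
    have "lie_deriv_1form I f \<alpha> j = mps_const 0"
      using assms(6) j by (simp add: \<alpha>_def P_def G_def I_def J_def)
    from fun_cong[OF this, of a] show ?thesis by (simp add: lie_deriv_1form_def const0)
  qed
  have g0: "mps_deriv 0 (g j) = (\<lambda>_. 0)" if "j \<in> J" for j
    by (rule ext, rule vars_deriv[of J]) (use assms(3) that nJ in \<open>auto simp: J_def\<close>)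
  have dG0: "mps_deriv 0 (G j) = (\<lambda>_. 0)" for j
    by (cases "j \<in> J") (simp_all add: G_def g0 const0 deriv_zero)
  have G0: "G 0 = (\<lambda>_. 0)" using nJ by (simp add: G_def const0)
  have dalpha: "mps_deriv k (\<alpha> j) a = mps_deriv k (mps_deriv j P) a + mps_deriv k (G j) a" for k j a
    unfolding \<alpha>_def mps_add_def mps_d0_def by (rule deriv_add)
  define H where "H = (\<lambda>a. \<Sum>k\<in>I. mps_mul (\<alpha> k) (f k) a)"
  define C where "C = (\<lambda>k j a. mps_deriv k (\<alpha> j) a - mps_deriv j (\<alpha> k) a)"
  have Cg: "C k j a = mps_deriv k (G j) a - mps_deriv j (G k) a" for k j a
  proof -
    have "mps_deriv k (mps_deriv j P) = mps_deriv j (mps_deriv k P)" by (rule deriv_comm)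
    then show ?thesis unfolding C_def dalpha by simp
  qed
  have E1: "(\<Sum>k\<in>I. mps_mul (f k) (C k j) a) + mps_deriv j H a = 0" if j: "j \<in> I" for j a
  proof -
    have dH: "mps_deriv j H a = (\<Sum>k\<in>I. mps_mul (mps_deriv j (\<alpha> k)) (f k) a + mps_mul (\<alpha> k) (mps_deriv j (f k)) a)"
      unfolding H_def deriv_sum deriv_mul ..
    have fc: "mps_mul (f k) (C k j) a = mps_mul (f k) (mps_deriv k (\<alpha> j)) a - mps_mul (mps_deriv j (\<alpha> k)) (f k) a" for k
    proof -
      have "C k j = (\<lambda>a. mps_deriv k (\<alpha> j) a - mps_deriv j (\<alpha> k) a)" by (simp add: C_def)
      then have "mps_mul (f k) (C k j) a = mps_mul (f k) (mps_deriv k (\<alpha> j)) a - mps_mul (f k) (mps_deriv j (\<alpha> k)) a"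
        by (simp add: mul_diff_right)
      then show ?thesis using fun_cong[OF mul_comm[of "f k" "mps_deriv j (\<alpha> k)"], of a] by simp
    qed
    have "(\<Sum>k\<in>I. mps_mul (f k) (C k j) a) + mps_deriv j H a
        = (\<Sum>k\<in>I. mps_mul (f k) (mps_deriv k (\<alpha> j)) a + mps_mul (\<alpha> k) (mps_deriv j (f k)) a)"
      unfolding dH fc by (simp add: sum_subtractf sum.distrib algebra_simps)
    then show ?thesis using lie[OF j] by simp
  qed
  have C0: "C k 0 = (\<lambda>_. 0)" for k
    by (rule ext) (simp add: Cg dG0 G0 deriv_zero)
  have dH0: "mps_deriv 0 H a = 0" for a
    using E1[of 0 a] by (simp add: I_def C0 mul_zero_right)
  have H0fun: "mps_deriv 0 H = (\<lambda>_. 0)" by (rule ext) (rule dH0)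
  have CW: "C k j = (if k \<in> J then mps_d1 g k j else (\<lambda>_. 0))" if "k \<in> I" "j \<in> J" for k j
  proof (rule ext)
    fix a
    show "C k j a = (if k \<in> J then mps_d1 g k j else (\<lambda>_. 0)) a"
    proof (cases "k \<in> J")
      case True then show ?thesis using that by (simp add: Cg G_def mps_d1_def mps_diff_def)
    next
      case False
      then have "k = 0" using that by (auto simp: I_def J_def)
      then show ?thesis using False by (simp add: Cg dG0 G0 deriv_zero)
    qed
  qed
  have E2: "(\<Sum>k\<in>J. mps_mul (f k) (mps_d1 g k j) a) + mps_deriv j H a = 0" if j: "j \<in> J" for j a
  proof -
    have jI: "j \<in> I" using j IJ by simp
    have "(\<Sum>k\<in>I. mps_mul (f k) (C k j) a) = mps_mul (f 0) (C 0 j) a + (\<Sum>k\<in>J. mps_mul (f k) (C k j) a)"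
      unfolding IJ using finJ nJ by simp
    also have "mps_mul (f 0) (C 0 j) a = 0" using CW[of 0 j] j nJ by (simp add: IJ mul_zero_right)
    also have "(\<Sum>k\<in>J. mps_mul (f k) (C k j) a) = (\<Sum>k\<in>J. mps_mul (f k) (mps_d1 g k j) a)"
      by (rule sum.cong) (use CW j IJ in auto)
    finally have X: "(\<Sum>k\<in>I. mps_mul (f k) (C k j) a) = (\<Sum>k\<in>J. mps_mul (f k) (mps_d1 g k j) a)" by simp
    have "(\<Sum>k\<in>I. mps_mul (f k) (C k j) a) + mps_deriv j H a = 0" by (rule E1[OF jI])
    then show ?thesis unfolding X .
  qed
  have dW: "mps_deriv 0 (mps_d1 g k j) = (\<lambda>_. 0)" if "k \<in> J" "j \<in> J" for k j
  proof (rule ext)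
    fix a
    have "mps_deriv 0 (mps_deriv k (g j)) = mps_deriv k (mps_deriv 0 (g j))" by (rule deriv_comm)
    moreover have "mps_deriv 0 (mps_deriv j (g k)) = mps_deriv j (mps_deriv 0 (g k))" by (rule deriv_comm)
    ultimately show "mps_deriv 0 (mps_d1 g k j) a = 0"
      unfolding mps_d1_def mps_diff_def using that by (simp add: deriv_diff g0 deriv_zero)
  qed
  have E3: "\<forall>a. (\<Sum>k\<in>J. mps_mul (mps_deriv 0 (f k)) (mps_d1 g k j) a) = 0" if j: "j \<in> J" for j
  proof
    fix a
    have "(\<lambda>a. (\<Sum>k\<in>J. mps_mul (f k) (mps_d1 g k j) a) + mps_deriv j H a) = (\<lambda>_. 0)"
      by (rule ext) (rule E2[OF j])
    then have "mps_deriv 0 (\<lambda>a. (\<Sum>k\<in>J. mps_mul (f k) (mps_d1 g k j) a) + mps_deriv j H a) a = 0"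
      by (simp add: deriv_zero)
    moreover have "mps_deriv 0 (mps_deriv j H) = mps_deriv j (mps_deriv 0 H)" by (rule deriv_comm)
    ultimately show "(\<Sum>k\<in>J. mps_mul (mps_deriv 0 (f k)) (mps_d1 g k j) a) = 0"
      using j by (simp add: deriv_add deriv_sum deriv_mul H0fun deriv_zero dW mul_zero_right)
  qed
  have df: "\<forall>k\<in>J. mps_deriv 0 (f k) a = 0" for a
  proof -
    have nd: "nondegenerate_2form J (mps_d1 g)" using assms(4) by (simp add: J_def)
    have "\<forall>j\<in>J. \<forall>a. (\<Sum>k\<in>J. mps_mul (mps_deriv 0 (f k)) (mps_d1 g k j) a) = 0" using E3 by blast
    from nondeg_zero[OF finJ nd this] show ?thesis .
  qed
  have dffun: "mps_deriv 0 (f k) = (\<lambda>_. 0)" if "k \<in> J" for k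
    using df that by auto
  define R :: "'a mps" where "R = (\<lambda>a. (if a = Poly_Mapping.single 0 (m-1) then of_nat m else 0) - (if a = Poly_Mapping.single 1 1 then (1::'a) else 0))"
  have PR: "mps_deriv 0 P = R" unfolding P_def R_def by (rule ext) (rule D0P[OF assms(1)])
  have alpha0: "\<alpha> 0 = R" unfolding \<alpha>_def mps_add_def mps_d0_def PR G0 by simp
  define Q where "Q = mps_mul (\<alpha> 0) (f 0)"
  have dak: "mps_deriv 0 (\<alpha> k) = (\<lambda>a. - (if k = 1 \<and> a = 0 then 1 else 0))" if "k \<in> J" for k
  proof (rule ext)
    fix a
    have "mps_deriv 0 (mps_deriv k P) = mps_deriv k (mps_deriv 0 P)" by (rule deriv_comm)
    moreover have "k \<noteq> 0" using that nJ by (cases k) auto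
    moreover have "mps_deriv k R a = - (if k = 1 \<and> a = 0 then 1 else 0)"
      unfolding R_def using \<open>k \<noteq> 0\<close> by (rule DkR)
    ultimately show "mps_deriv 0 (\<alpha> k) a = - (if k = 1 \<and> a = 0 then 1 else 0)"
      by (simp add: dalpha dG0 PR)
  qed
  have termk: "mps_mul (mps_deriv 0 (\<alpha> k)) (f k) a + mps_mul (\<alpha> k) (mps_deriv 0 (f k)) a = (if k = 1 then - f 1 a else 0)"
    if "k \<in> J" for k a
  proof (cases "k = 1")
    case True
    have "mps_mul (\<lambda>c. - (if c = 0 then 1 else 0)) (f 1) a = - f 1 a"
      by (simp add: mul_uminus_left mul_ind_left)
    then show ?thesis using True that by (simp add: dak dffun mul_zero_right)
  next
    case False
    then show ?thesis using that by (simp add: dak dffun mul_zero_right mul_zero_left)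
  qed
  have Q_eq: "mps_deriv 0 Q a = f 1 a" for a
  proof -
    have "mps_deriv 0 H a = (\<Sum>k\<in>I. mps_mul (mps_deriv 0 (\<alpha> k)) (f k) a + mps_mul (\<alpha> k) (mps_deriv 0 (f k)) a)"
      unfolding H_def deriv_sum deriv_mul ..
    also have "\<dots> = mps_deriv 0 Q a + (\<Sum>k\<in>J. mps_mul (mps_deriv 0 (\<alpha> k)) (f k) a + mps_mul (\<alpha> k) (mps_deriv 0 (f k)) a)"
      unfolding IJ Q_def deriv_mul using finJ nJ by simp
    also have "(\<Sum>k\<in>J. mps_mul (mps_deriv 0 (\<alpha> k)) (f k) a + mps_mul (\<alpha> k) (mps_deriv 0 (f k)) a) = (\<Sum>k\<in>J. if k = 1 then - f 1 a else 0)"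
      by (rule sum.cong) (simp_all add: termk)
    also have "\<dots> = - f 1 a" using finJ oneJ by simp
    finally show ?thesis using dH0[of a] by simp
  qed
  let ?e0 = "Poly_Mapping.single (0::nat) (1::nat)"
  have Qvan: "Q (a + ?e0 + ?e0) = 0" for a
  proof -
    have "mps_deriv 0 (f 1) a = 0" using df oneJ by auto
    then have "f 1 (a + ?e0) = 0" by (rule deriv_coeff_zero)
    then have "mps_deriv 0 Q (a + ?e0) = 0" using Q_eq by simp
    then show ?thesis by (rule deriv_coeff_zero)
  qed
  have Q2: "Q b = 0" if "2 \<le> Poly_Mapping.lookup b 0" for b
  proof -
    let ?b' = "b - ?e0"
    have h1: "?b' + ?e0 = b" by (rule pm_minus_add) (use that in simp)
    have "Poly_Mapping.lookup ?b' 0 = Poly_Mapping.lookup b 0 - 1" by (rule lookup_minus_single)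
    then have h2: "(?b' - ?e0) + ?e0 = ?b'" by (intro pm_minus_add) (use that in simp)
    have "b = (?b' - ?e0) + ?e0 + ?e0" using h1 h2 by simp
    then show ?thesis using Qvan by metis
  qed
  let ?E = "Poly_Mapping.single (0::nat) (m - 1::nat)"
  let ?e1 = "Poly_Mapping.single (1::nat) (1::nat)"
  have Qf: "Q (b + ?E) = of_nat m * f 0 b - (if \<exists>c. b + ?E = ?e1 + c then 1 * f 0 (b + ?E - ?e1) else 0)" for b
    unfolding Q_def alpha0 R_def mul_diff_left mul_ind_left by (simp, metis add.commute)
  have m0: "(of_nat m :: 'a) \<noteq> 0" using assms(1) by simp
  have f0z: "\<forall>b. Poly_Mapping.lookup b 1 = t \<longrightarrow> f 0 b = 0" for t
  proof (induction t)
    case 0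
    show ?case
    proof (intro allI impI)
      fix b :: "nat \<Rightarrow>\<^sub>0 nat" assume b: "Poly_Mapping.lookup b 1 = 0"
      have "Q (b + ?E) = 0" using assms(1) by (intro Q2) (simp add: lookup_add)
      moreover have "\<not> (\<exists>c. b + ?E = ?e1 + c)"
      proof
        assume "\<exists>c. b + ?E = ?e1 + c"
        then obtain c where "b + ?E = ?e1 + c" by blast
        then have "Poly_Mapping.lookup (b + ?E) 1 = Poly_Mapping.lookup (?e1 + c) 1" by simp
        then show False using b by (simp add: lookup_add lookup_single)
      qed
      ultimately show "f 0 b = 0" using Qf[of b] m0 by simp
    qed
  next
    case (Suc t)
    show ?case
    proof (intro allI impI)
      fix b :: "nat \<Rightarrow>\<^sub>0 nat" assume b: "Poly_Mapping.lookup b 1 = Suc t"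
      have "Q (b + ?E) = 0" using assms(1) by (intro Q2) (simp add: lookup_add)
      moreover have "Poly_Mapping.lookup (b + ?E - ?e1) 1 = t" using b by (simp add: lookup_add lookup_minus lookup_single)
      then have "f 0 (b + ?E - ?e1) = 0" using Suc.IH by blast
      then have "(if \<exists>c. b + ?E = ?e1 + c then 1 * f 0 (b + ?E - ?e1) else 0) = 0" by simp
      then have "of_nat m * f 0 b = 0" using Qf[of b] \<open>Q (b + ?E) = 0\<close> by simp
      then show "f 0 b = 0" using m0 by simp
    qed
  qed
  have f0: "f 0 = (\<lambda>_. 0)" using f0z by blast
  have "Q = (\<lambda>_. 0)" unfolding Q_def f0 by (rule mul_zero_right)
  then have f1: "f 1 = (\<lambda>_. 0)" using Q_eq by (auto simp: deriv_zero)
  show ?thesis using f0 f1 by (simp add: const0)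
qed

end
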